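(* Let $\rho$ be a rational number with $0<\rho<1$ and $\rho\neq\frac12$. Then there is no integer $n>1$ such that $$n\tan(\pi\rho)=\tan(n\pi\rho).$$ *)

theory Defs
  imports "HOL-Analysis.Analysis"
begin

end

theory Submission imports Defs "Jordan_Normal_Form.Char_Poly" "HOL-Number_Theory.Cong" begin

definition ZR :: "complex \<Rightarrow> complex set" where
 "ZR z = {x. \<exists>h::int poly. x = poly (of_int_poly h) z}"

lemma ZR_const: "(of_int c :: complex) \<in> ZR z"
  proof -
  have "poly (of_int_poly (monom c 0)) z = (of_int c :: complex)" by (simp add: poly_monom)
  thus ?thesis unfolding ZR_def by (metis (mono_tags, lifting) mem_Collect_eq)
qed

lemma ZR_z: "z \<in> ZR z"
  unfolding ZR_def by (rule CollectI, rule exI[of _ "[:0,1:]"], simp)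

lemma ZR_add: "x \<in> ZR z \<Longrightarrow> y \<in> ZR z \<Longrightarrow> x + y \<in> ZR z"
  unfolding ZR_def apply clarify
  subgoal for h1 h2 by (rule exI[of _ "h1+h2"], simp add: hom_distribs)
  done

lemma ZR_mult: "x \<in> ZR z \<Longrightarrow> y \<in> ZR z \<Longrightarrow> x * y \<in> ZR z"
  unfolding ZR_def apply clarify
  subgoal for h1 h2 by (rule exI[of _ "h1*h2"], simp add: hom_distribs)
  done

lemma ZR_uminus: "x \<in> ZR z \<Longrightarrow> - x \<in> ZR z"
  using ZR_mult[OF ZR_const[of "-1"]] by simp

lemma ZR_diff: "x \<in> ZR z \<Longrightarrow> y \<in> ZR z \<Longrightarrow> x - y \<in> ZR z"
  unfolding diff_conv_add_uminus by (intro ZR_add ZR_uminus)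

lemma ZR_nat: "(of_nat n :: complex) \<in> ZR z"
  using ZR_const[of "int n"] by simp

lemma ZR_pow: "x \<in> ZR z \<Longrightarrow> x ^ n \<in> ZR z"
  by (induction n) (auto intro: ZR_mult ZR_const[of 1, simplified])

lemma ZR_sum: "(\<And>i. i \<in> A \<Longrightarrow> f i \<in> ZR z) \<Longrightarrow> sum f A \<in> ZR z"
  by (induction A rule: infinite_finite_induct) (auto intro: ZR_add ZR_const[of 0, simplified])

lemma key:
  fixes z :: complex and h :: "int poly" and c d :: int and N :: nat
  assumes zN: "z^N = 1" and N: "N > 0" and eq: "of_int c * poly (of_int_poly h) z = of_int d"
  shows "c dvd d^N"
proof -
  define K where "K = degree h"
  define A where "A = (\<lambda>j i::nat. (\<Sum>k\<le>K. if (j+k) mod N = i then coeff h k else 0))"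
  have zmod: "z^(m mod N) = z^m" for m
  proof -
    have "z^m = z^(N*(m div N) + m mod N)" by simp
    also have "\<dots> = (z^N)^(m div N) * z^(m mod N)" by (simp only: power_add power_mult)
    finally show ?thesis using zN by simp
  qed
  have row: "(\<Sum>i<N. of_int (A j i) * z^i) = z^j * poly (of_int_poly h) z" for j
  proof -
    have "(\<Sum>i<N. of_int (A j i) * z^i) = (\<Sum>i<N. \<Sum>k\<le>K. (if (j+k) mod N = i then of_int (coeff h k) * z^i else 0))"
      unfolding A_def of_int_sum sum_distrib_right by (auto intro!: sum.cong)
    also have "\<dots> = (\<Sum>k\<le>K. \<Sum>i<N. (if (j+k) mod N = i then of_int (coeff h k) * z^i else 0))"
      by (rule sum.swap)
    also have "\<dots> = (\<Sum>k\<le>K. of_int (coeff h k) * z^((j+k) mod N))"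
      using N by (simp add: sum.delta)
    also have "\<dots> = (\<Sum>k\<le>K. of_int (coeff h k) * z^(j+k))"
      using zmod by simp
    also have "\<dots> = z^j * poly (of_int_poly h) z"
      by (simp add: poly_altdef K_def sum_distrib_left power_add mult_ac)
    finally show ?thesis .
  qed
  define M where "M = mat N N (\<lambda>(j,i). c * A j i - (if j = i then d else 0))"
  define Mc where "Mc = map_mat (of_int :: int \<Rightarrow> complex) M"
  define v where "v = vec N (\<lambda>i. z^i)"
  have Mcar: "M \<in> carrier_mat N N" unfolding M_def by simp
  have Mc: "Mc \<in> carrier_mat N N" unfolding Mc_def M_def by simp
  have v: "v \<in> carrier_vec N" unfolding v_def by simp
  have "Mc *\<^sub>v v = 0\<^sub>v N"
  proof (rule eq_vecI)
    show "dim_vec (Mc *\<^sub>v v) = dim_vec (0\<^sub>v N)" using Mc by simp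
    fix j assume "j < dim_vec (0\<^sub>v N)"
    hence j: "j < N" by simp
    have "(Mc *\<^sub>v v) $ j = (\<Sum>i<N. (of_int c * of_int (A j i) - (if j = i then of_int d else 0)) * z^i)"
      using j Mc unfolding Mc_def M_def v_def
      apply (simp add: scalar_prod_def lessThan_atLeast0 row_def)
      by (rule sum.cong) auto
    also have "\<dots> = (\<Sum>i<N. of_int c * (of_int (A j i) * z^i) - (if j = i then of_int d * z^i else 0))"
      by (rule sum.cong) (auto simp: algebra_simps)
    also have "\<dots> = of_int c * (\<Sum>i<N. of_int (A j i) * z^i) - of_int d * z^j"
      using j by (simp add: sum_subtractf sum_distrib_left sum.delta)
    also have "\<dots> = z^j * (of_int c * poly (of_int_poly h) z - of_int d)"
      unfolding row by (simp add: algebra_simps)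
    also have "\<dots> = 0" using eq by simp
    finally show "(Mc *\<^sub>v v) $ j = 0\<^sub>v N $ j" using j by simp
  qed
  moreover have "v \<noteq> 0\<^sub>v N"
  proof
    assume "v = 0\<^sub>v N"
    hence "v $ 0 = 0" using N by simp
    thus False using N unfolding v_def by simp
  qed
  ultimately have "Determinant.det Mc = 0" using det_0_iff_vec_prod_zero[OF Mc] v by blast
  hence detM: "Determinant.det M = 0" unfolding Mc_def by simp
  define D where "D = (-d) \<cdot>\<^sub>m (1\<^sub>m N :: int mat)"
  have Dcar: "D \<in> carrier_mat N N" unfolding D_def by simp
  have detD: "Determinant.det D = (-d)^N" unfolding D_def by simp
  have "[Determinant.det M = Determinant.det D] (mod c)"
    unfolding det_def'[OF Mcar] det_def'[OF Dcar]
  proof (rule cong_sum, rule cong_mult[OF cong_refl], rule cong_prod)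
    fix p i assume p: "p \<in> {p. p permutes {0..<N}}" and i: "i \<in> {0..<N}"
    have pi: "p i < N" using p i by (auto dest: permutes_in_image)
    have "M $$ (i, p i) - D $$ (i, p i) = c * A i (p i)"
      using i pi unfolding M_def D_def by auto
    thus "[M $$ (i, p i) = D $$ (i, p i)] (mod c)"
      by (simp add: cong_iff_dvd_diff)
  qed
  hence "c dvd (-d)^N" using detM detD by (simp add: cong_iff_dvd_diff cong_sym_eq)
  hence "c dvd (-1)^N * (-d)^N" by (rule dvd_mult)
  thus ?thesis by (simp add: power_mult_distrib[symmetric])
qed

lemma binom3:
  fixes X :: "'a::comm_ring_1"
  assumes "2 \<le> p"
  shows "(1+X)^p = 1 + of_nat p * X + of_nat (p choose 2) * X^2 + X^3 * (\<Sum>k\<in>{3..p}. of_nat (p choose k) * X^(k-3))"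
proof -
  have "(1+X)^p = (\<Sum>k\<le>p. of_nat (p choose k) * X^k)"
    using binomial_ring[of X 1 p] by (simp add: add.commute)
  also have "{..p} = {0,1,2} \<union> {3..p}" using assms by auto
  also have "(\<Sum>k\<in>{0,1,2} \<union> {3..p}. of_nat (p choose k) * X^k) =
     (\<Sum>k\<in>{0,1,2}. of_nat (p choose k) * X^k) + (\<Sum>k\<in>{3..p}. of_nat (p choose k) * X^k)"
    by (rule sum.union_disjoint) auto
  also have "(\<Sum>k\<in>{3..p}. of_nat (p choose k) * X^k) = X^3 * (\<Sum>k\<in>{3..p}. of_nat (p choose k) * X^(k-3))"
    unfolding sum_distrib_left
  proof (rule sum.cong)
    fix k assume "k \<in> {3..p}"
    hence "X^k = X^3 * X^(k-3)" by (simp add: power_add[symmetric])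
    thus "of_nat (p choose k) * X^k = X^3 * (of_nat (p choose k) * X^(k-3))" by (simp add: mult_ac)
  qed simp
  finally show ?thesis by (simp add: numeral_2_eq_2)
qed

lemma ZR_poly: "x \<in> ZR z \<Longrightarrow> \<exists>h. x = poly (of_int_poly h) z"
  unfolding ZR_def by simp

lemma unity:
  fixes z \<zeta> \<gamma> :: complex and b :: int
  assumes zN: "z^N = 1" and N: "N > 0" and \<zeta>Z: "\<zeta> \<in> ZR z" and \<zeta>R: "\<zeta>^R = 1" and R: "R > 0"
    and \<zeta>1: "\<zeta> \<noteq> 1" and \<gamma>: "\<gamma> \<in> ZR z" and eq: "\<zeta> - 1 = of_int b * \<gamma>" and b: "b \<ge> 3"
  shows False
proof -
  define R0 where "R0 = (LEAST r. r > 0 \<and> \<zeta>^r = 1)"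
  have R0: "R0 > 0 \<and> \<zeta>^R0 = 1" unfolding R0_def by (rule LeastI[of _ R]) (use R \<zeta>R in auto)
  have R0min: "\<zeta>^r \<noteq> 1" if "0 < r" "r < R0" for r
    using not_less_Least[of r "\<lambda>r. r>0 \<and> \<zeta>^r = 1"] that unfolding R0_def by auto
  have "R0 \<noteq> 1" using R0 \<zeta>1 by auto
  then obtain p where p: "prime p" "p dvd R0" using prime_factor_nat by blast
  have p2: "2 \<le> p" using prime_ge_2_nat[OF p(1)] .
  define m where "m = R0 div p"
  have Rm: "R0 = m * p" using p(2) unfolding m_def by simp
  have m: "0 < m" "m < R0" using Rm R0 p2 by (auto simp: nat_0_less_mult_iff)
  define \<omega> where "\<omega> = \<zeta>^m"
  have \<omega>1: "\<omega> \<noteq> 1" using R0min m by (simp add: \<omega>_def)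
  have \<omega>p: "\<omega>^p = 1" using R0 Rm by (simp add: \<omega>_def power_mult[symmetric])
  define \<gamma>' where "\<gamma>' = \<gamma> * (\<Sum>i<m. \<zeta>^i)"
  have \<gamma>'Z: "\<gamma>' \<in> ZR z" unfolding \<gamma>'_def
    by (intro ZR_mult \<gamma> ZR_sum ZR_pow \<zeta>Z)
  have \<omega>eq: "\<omega> - 1 = of_int b * \<gamma>'"
    using power_diff_1_eq[of \<zeta> m] eq unfolding \<omega>_def \<gamma>'_def by (simp add: mult_ac)
  define X where "X = of_int b * \<gamma>'"
  have X0: "X \<noteq> 0" using \<omega>1 \<omega>eq X_def by auto
  have XZ: "X \<in> ZR z" unfolding X_def by (intro ZR_mult ZR_const \<gamma>'Z)
  define U where "U = (\<Sum>k\<in>{3..p}. of_nat (p choose k) * X^(k-3))"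
  have UZ: "U \<in> ZR z" unfolding U_def by (intro ZR_sum ZR_mult ZR_nat ZR_pow XZ)
  have "\<omega> = 1 + X" using \<omega>eq X_def by (simp add: algebra_simps)
  hence "1 = (1+X)^p" using \<omega>p by simp
  hence "of_nat p * X + of_nat (p choose 2) * X^2 + X^3 * U = 0"
    using binom3[OF p2, of X] U_def by (simp add: add.assoc)
  hence "X * (of_nat p + of_nat (p choose 2) * X + X^2 * U) = 0"
    by (simp add: algebra_simps power2_eq_square power3_eq_cube)
  hence E1: "of_nat p + of_nat (p choose 2) * X + X^2 * U = 0" using X0 by simp
  define \<delta> where "\<delta> = - (of_nat (p choose 2) * \<gamma>' + of_int b * \<gamma>'^2 * U)"
  have \<delta>Z: "\<delta> \<in> ZR z" unfolding \<delta>_def by (intro ZR_uminus ZR_add ZR_mult ZR_nat ZR_const ZR_pow \<gamma>'Z UZ)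
  have "of_int b * \<delta> = of_nat p - (of_nat p + of_nat (p choose 2) * X + X^2 * U)"
    unfolding X_def \<delta>_def by (simp add: algebra_simps power2_eq_square)
  hence "of_int b * \<delta> = of_nat p" using E1 by simp
  hence "of_int b * \<delta> = of_int (int p)" by simp
  with \<delta>Z obtain h where "of_int b * poly (of_int_poly h) z = of_int (int p)"
    using ZR_poly by blast
  from key[OF zN N this] have bdvd: "b dvd int p ^ N" .
  have pint: "prime (int p)" using p(1) by simp
  from bdvd obtain i where i: "i \<le> N" "normalize b = int p ^ i"
    using divides_primepow[OF pint] by blast
  have bi: "b = int p ^ i" using i b by simp
  have i1: "i \<ge> 1" using bi b by (cases i) auto
  show False
  proof (cases "i \<ge> 2")
    case True
    have "of_int (int p ^ i) * \<delta> = of_int (int p)" using \<open>of_int b * \<delta> = of_int (int p)\<close> bi by simp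
    hence "of_nat p * (of_nat p ^ (i-1) * \<delta>) = of_nat p * 1"
      using i1 by (simp add: power_eq_if[of _ i] split: if_splits)
    hence "of_int (int p ^ (i-1)) * \<delta> = of_int 1" using p2 by simp
    with \<delta>Z obtain h where "of_int (int p ^ (i-1)) * poly (of_int_poly h) z = of_int 1"
      using ZR_poly by blast
    from key[OF zN N this] have "int p ^ (i-1) dvd 1" by simp
    hence "int p ^ (i-1) = 1" by simp
    moreover have "int p ^ (i-1) \<ge> int p ^ 1" using True p2 by (intro power_increasing) auto
    ultimately show False using p2 by simp
  next
    case False
    hence "i = 1" using i1 by simp
    hence bp: "b = int p" using bi by simp
    hence p3: "p \<ge> 3" using b by simp
    hence "odd p" using p(1) prime_odd_nat by auto
    hence ch: "p choose 2 = p * ((p - 1) div 2)"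
      by (auto simp: choose_two elim!: oddE)
    have "of_nat p * (1 + of_nat p * (of_nat ((p - 1) div 2) * \<gamma>' + \<gamma>'^2 * U)) = of_nat p * 0"
      using E1 unfolding X_def bp ch by (simp add: algebra_simps power2_eq_square)
    hence "1 + of_nat p * (of_nat ((p - 1) div 2) * \<gamma>' + \<gamma>'^2 * U) = 0" using p2 by simp
    hence "of_nat p * (of_nat ((p - 1) div 2) * \<gamma>' + \<gamma>'^2 * U) = -1"
      by (simp only: add_eq_0_iff)
    hence "of_int (int p) * (- (of_nat ((p - 1) div 2) * \<gamma>' + \<gamma>'^2 * U)) = of_int 1"
      by (simp only: mult_minus_right of_int_of_nat_eq) simp
    moreover have "- (of_nat ((p - 1) div 2) * \<gamma>' + \<gamma>'^2 * U) \<in> ZR z"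
      by (intro ZR_uminus ZR_add ZR_mult ZR_nat ZR_pow \<gamma>'Z UZ)
    ultimately obtain h where "of_int (int p) * poly (of_int_poly h) z = of_int 1"
      using ZR_poly by metis
    from key[OF zN N this] have "int p dvd 1" by simp
    thus False using p2 by simp
  qed
qed

lemma cis_double_minus: "cis (2*x) - 1 = 2 * \<i> * complex_of_real (sin x) * cis x"
  by (simp add: complex_eq_iff cos_double_sin sin_double power2_eq_square)

lemma cis_double_plus: "cis (2*x) + 1 = 2 * complex_of_real (cos x) * cis x"
  by (simp add: complex_eq_iff cos_double_cos sin_double power2_eq_square)

theorem theorem1:
  fixes \<rho> :: real
  assumes "\<rho> \<in> \<rat>" and "0 < \<rho>" and "\<rho> < 1" and "\<rho> \<noteq> 1/2"
  shows "\<not> (\<exists>n::nat. n > 1 \<and> real n * tan (pi * \<rho>) = tan (real n * pi * \<rho>))"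
proof
  assume "\<exists>n::nat. n > 1 \<and> real n * tan (pi * \<rho>) = tan (real n * pi * \<rho>)"
  then obtain n :: nat where n1: "n > 1" and eqn: "real n * tan (pi * \<rho>) = tan (real n * pi * \<rho>)"
    by blast
  obtain a q where q: "q > 0" and \<rho>q: "\<rho> = of_int a / of_int q"
    using Rats_cases'[OF assms(1)] by metis
  have a0: "a > 0" using \<rho>q q assms(2) by (simp add: zero_less_divide_iff)
  then obtain k :: nat where ak: "a = int k" using pos_int_cases by fastforce
  obtain Q :: nat where qQ: "q = int Q" using q pos_int_cases by fastforce
  have Q: "Q > 0" using q qQ by simp
  define \<theta> where "\<theta> = pi * \<rho>"
  have \<theta>0: "0 < \<theta>" "\<theta> < pi" using assms(2,3) unfolding \<theta>_def by auto
  have sin0: "sin \<theta> > 0" using sin_gt_zero[OF \<theta>0] .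
  have cos0: "cos \<theta> \<noteq> 0"
  proof
    assume "cos \<theta> = 0"
    hence "cos \<theta> = cos (pi/2)" by simp
    hence "\<theta> = pi/2" using \<theta>0 cos_inj_pi[of \<theta> "pi/2"] by auto
    hence "\<rho> = 1/2" unfolding \<theta>_def by simp
    thus False using assms(4) by simp
  qed
  have tan0: "tan \<theta> \<noteq> 0" using sin0 cos0 by (simp add: tan_def)
  have nth: "real n * pi * \<rho> = real n * \<theta>" unfolding \<theta>_def by simp
  have eqn': "real n * tan \<theta> = tan (real n * \<theta>)" using eqn nth \<theta>_def by simp
  have cosn0: "cos (real n * \<theta>) \<noteq> 0"
  proof
    assume "cos (real n * \<theta>) = 0"
    hence "tan (real n * \<theta>) = 0" by (simp add: tan_def)
    thus False using eqn' tan0 n1 by simp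
  qed
  have rid: "real n * sin \<theta> * cos (real n * \<theta>) = sin (real n * \<theta>) * cos \<theta>"
    using eqn' cos0 cosn0 by (simp add: tan_def field_simps)
  define w where "w = cis (2*\<theta>)"
  have wn: "w^n = cis (2 * (real n * \<theta>))" unfolding w_def Complex.DeMoivre by (simp add: mult_ac)
  have wm: "w - 1 = 2 * \<i> * complex_of_real (sin \<theta>) * cis \<theta>" unfolding w_def by (rule cis_double_minus)
  have wp: "w + 1 = 2 * complex_of_real (cos \<theta>) * cis \<theta>" unfolding w_def by (rule cis_double_plus)
  have wnm: "w^n - 1 = 2 * \<i> * complex_of_real (sin (real n * \<theta>)) * cis (real n * \<theta>)"
    unfolding wn by (rule cis_double_minus)
  have wnp: "w^n + 1 = 2 * complex_of_real (cos (real n * \<theta>)) * cis (real n * \<theta>)"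
    unfolding wn by (rule cis_double_plus)
  have ridc: "of_nat n * complex_of_real (sin \<theta>) * complex_of_real (cos (real n * \<theta>))
       = complex_of_real (sin (real n * \<theta>)) * complex_of_real (cos \<theta>)"
    using arg_cong[OF rid, of complex_of_real] by simp
  have E0: "of_nat n * (w - 1) * (w^n + 1) = (w^n - 1) * (w + 1)"
  proof -
    have "of_nat n * (w - 1) * (w^n + 1) = 4 * \<i> * cis \<theta> * cis (real n * \<theta>) *
        (of_nat n * complex_of_real (sin \<theta>) * complex_of_real (cos (real n * \<theta>)))"
      unfolding wm wnp by (simp add: mult_ac)
    also have "\<dots> = 4 * \<i> * cis \<theta> * cis (real n * \<theta>) *
        (complex_of_real (sin (real n * \<theta>)) * complex_of_real (cos \<theta>))" using ridc by simp
    also have "\<dots> = (w^n - 1) * (w + 1)" unfolding wnm wp by (simp add: mult_ac)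
    finally show ?thesis .
  qed
  have P: "(of_nat n - 1) * (w^(n+1) - 1) = (of_nat n + 1) * (w^n - w)"
    using E0 by (simp add: algebra_simps)
  have w21: "w^2 \<noteq> 1"
  proof
    assume "w^2 = 1"
    hence "(w - 1) * (w + 1) = 0" by (simp add: algebra_simps power2_eq_square)
    thus False unfolding wm wp using sin0 cos0 by simp
  qed
  have wq: "w^Q = 1"
  proof -
    have "real Q * (2*\<theta>) = 2 * pi * real k" unfolding \<theta>_def \<rho>q ak qQ using Q by simp
    hence e: "real Q * (2*\<theta>) = real k * (2*pi)" by (simp add: mult_ac)
    have "w^Q = cis (real Q * (2*\<theta>))" unfolding w_def by (simp only: Complex.DeMoivre)
    also have "\<dots> = cis (real k * (2*pi))" unfolding e ..
    also have "\<dots> = cis (2*pi) ^ k" by (simp only: Complex.DeMoivre)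
    finally show ?thesis by simp
  qed
  define \<zeta> where "\<zeta> = w^(n+1)"
  have \<zeta>Z: "\<zeta> \<in> ZR w" unfolding \<zeta>_def by (intro ZR_pow ZR_z)
  have \<zeta>q: "\<zeta>^Q = 1" 
  proof -
    have "\<zeta>^Q = w^((n+1)*Q)" unfolding \<zeta>_def by (simp only: power_mult)
    also have "\<dots> = (w^Q)^(n+1)" by (simp only: mult.commute[of "n+1"] power_mult)
    finally show ?thesis using wq by simp
  qed
  have \<zeta>1: "\<zeta> \<noteq> 1"
  proof
    assume "\<zeta> = 1"
    have "(of_nat (Suc n) :: complex) \<noteq> 0" by (rule of_nat_neq_0)
    hence np: "(of_nat n + 1 :: complex) \<noteq> 0" by (simp add: add.commute)
    hence "w^n = w" using P n1 \<open>\<zeta> = 1\<close> unfolding \<zeta>_def by simp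
    hence "w^(n+1) = w^2" by (simp add: power2_eq_square)
    thus False using \<open>\<zeta> = 1\<close> w21 unfolding \<zeta>_def by simp
  qed
  define E where "E = \<zeta> - 1"
  define F where "F = w^n - w"
  have FZ: "F \<in> ZR w" unfolding F_def by (intro ZR_diff ZR_pow ZR_z)
  have EZ: "E \<in> ZR w" unfolding E_def by (intro ZR_diff \<zeta>Z ZR_const[of 1, simplified])
  have P': "(of_nat n - 1) * E = (of_nat n + 1) * F" using P unfolding E_def F_def \<zeta>_def .
  show False
  proof (cases "even n")
    case True
    then obtain m where m: "n = 2*m" by blast
    have m1: "m \<ge> 1" using n1 m by simp
    have Pm: "(2 * of_nat m - 1) * E = (2 * of_nat m + 1) * F" using P' m by simp
    define \<gamma> where "\<gamma> = of_nat m * F + (1 - of_nat m) * E"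
    have \<gamma>Z: "\<gamma> \<in> ZR w" unfolding \<gamma>_def
      by (intro ZR_add ZR_mult ZR_nat ZR_diff FZ EZ ZR_const[of 1, simplified])
    have "of_int (2 * int m + 1) * \<gamma> - E = of_nat m * ((2 * of_nat m + 1) * F - (2 * of_nat m - 1) * E)"
      unfolding \<gamma>_def by (simp add: algebra_simps)
    hence "E = of_int (2 * int m + 1) * \<gamma>" using Pm by simp
    thus False using unity[OF wq Q \<zeta>Z \<zeta>q Q \<zeta>1 \<gamma>Z, of "2 * int m + 1"] m1 unfolding E_def by simp
  next
    case False
    then obtain m where m: "n = 2*m + 1" using oddE by blast
    have m1: "m \<ge> 1" using n1 m by simp
    have Pm: "(2 * of_nat m) * E = (2 * of_nat m + 2) * F" using P' m by (simp add: algebra_simps)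
    hence "2 * (of_nat m * E) = 2 * ((of_nat m + 1) * F)" by (simp add: algebra_simps)
    hence Pm': "of_nat m * E = (of_nat m + 1) * F" by simp
    show False
    proof (cases "m = 1")
      case True
      hence "E = 2 * F" using Pm' by simp
      hence "(w^2 - 1) * (w - 1)^2 = 0" unfolding E_def F_def \<zeta>_def using m True
        by (simp add: algebra_simps power2_eq_square power3_eq_cube power4_eq_xxxx)
      hence "w^2 = 1 \<or> w = 1" by simp
      thus False using w21 by auto
    next
      case False
      hence m2: "m \<ge> 2" using m1 by simp
      define \<gamma> where "\<gamma> = E - F"
      have \<gamma>Z: "\<gamma> \<in> ZR w" unfolding \<gamma>_def by (intro ZR_diff FZ EZ)
      have "E = of_int (int m + 1) * \<gamma>" using Pm' unfolding \<gamma>_def by (simp add: algebra_simps)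
      thus False using unity[OF wq Q \<zeta>Z \<zeta>q Q \<zeta>1 \<gamma>Z, of "int m + 1"] m2 unfolding E_def by simp
    qed
  qed
qed

end
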